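(* Let $\mathcal{T}$ be a triangulation of $C(m,2d+1)$ with a mutable $d$-simplex $A\in\operatorname{simp}(\mathcal{T})$ which is replaced by the $(d+1)$-simplex $B=(b_0,\dots,b_{d+1})$ in the increasing flip. Then $B'=(b_1,b_2,\dots,b_d)$ is the unique support of $A$ with respect to $\operatorname{simp}(\mathcal{T})$.
   Context: $C(V,n)$ is the cyclic polytope on a finite ordered set $V$ (convex hull of $(t_v,\dots,t_v^n)$, $t_v$ increasing); a triangulation is a set of $(n+1)$-subsets of $V$ whose geometric simplices form a simplicial complex covering $C(V,n)$; its simplices include all faces (subsets) of its members. A $k$-simplex is a $(k+1)$-subset, always written in increasing order $A=(a_0,a_1,\dots)$. An $n$-subset $F\subseteq V$ is a lower (upper) facet of $C(V,n)$ iff every $w\in V\setminus F$ has an even (odd) number of elements of $F$ greater than it. A $d$-simplex $A\subseteq[m]$ is internal for $C(m,2d+1)$ if it lies in no facet of $C(m,2d+1)$; equivalently $a_{i+1}\geq a_i+2$ for all $i$, $a_d\leq a_0+m-2$, $a_0\neq 1$, $a_d\neq m$ (the set of these is denoted $\nu_{m,d}$ here). $\operatorname{simp}(\mathcal{T})$ is the set of internal $d$-simplices that are faces of simplices of $\mathcal{T}$. For a $d$-subset $\Sigma$ (size $d$) and a $(d+1)$-subset $A$, write $\Sigma\wr A$ if $a_0<\sigma_0<a_1<\dots<\sigma_{d-1}<a_d$; for a $(d+1)$-subset $A$ and a $(d+2)$-subset $B$, write $A\wr B$ if $b_0<a_0<b_1<\dots<a_d<b_{d+1}$. For $|U|=2d+3$,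 $C(U,2d+1)$ has two triangulations, the lower one (lower facets of $C(U,2d+2)$) and the upper one (upper facets). $A\in\operatorname{simp}(\mathcal{T})$ is a mutable $d$-simplex replaced by the $(d+1)$-simplex $B$ if $A\wr B$, $C(A\cup B,2d+1)$ is a subpolytope of $\mathcal{T}$ (i.e. $\{S\in\mathcal{T}:S\subseteq A\cup B\}$ triangulates it), and the induced triangulation is the lower one; the increasing flip replaces it by the upper triangulation. For $\mathbf{X}\subseteq\nu_{m,d}$ and $A\in\mathbf{X}$, a $(d-1)$-simplex $\Sigma$ (a $d$-subset) is a support for $A$ if $\Sigma\wr A$ and every $C\in\nu_{m,d}$ with $C\subseteq A\cup\Sigma$ lies in $\mathbf{X}$. *)

theory Defs
  imports Complex_Main
begin

text \<open>Points of R^n are represented as functions nat => real (coordinates 1..n used,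
 all others 0). The moment-curve point of vertex v is (t v, t v^2, ..., t v^n).\<close>

definition mpt :: "(nat \<Rightarrow> real) \<Rightarrow> nat \<Rightarrow> nat \<Rightarrow> (nat \<Rightarrow> real)" where
  "mpt t n v = (\<lambda>i. if 1 \<le> i \<and> i \<le> n then t v ^ i else 0)"

definition cconv :: "(nat \<Rightarrow> real) \<Rightarrow> nat \<Rightarrow> nat set \<Rightarrow> (nat \<Rightarrow> real) set" where
  "cconv t n X = {x. \<exists>u. (\<forall>v\<in>X. 0 \<le> u v) \<and> (\<Sum>v\<in>X. u v) = 1 \<and>
                        x = (\<lambda>i. \<Sum>v\<in>X. u v * mpt t n v i)}"

definition triangulation :: "(nat \<Rightarrow> real) \<Rightarrow> nat \<Rightarrow> nat set \<Rightarrow> nat set set \<Rightarrow> bool" where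
  "triangulation t n V T \<longleftrightarrow>
     finite V \<and>
     (\<forall>S\<in>T. S \<subseteq> V \<and> card S = n + 1) \<and>
     (\<forall>S\<in>T. \<forall>S'\<in>T. cconv t n S \<inter> cconv t n S' = cconv t n (S \<inter> S')) \<and>
     (\<Union>S\<in>T. cconv t n S) = cconv t n V"

definition lower_facet :: "nat \<Rightarrow> nat set \<Rightarrow> nat set \<Rightarrow> bool" where
  "lower_facet n V F \<longleftrightarrow> F \<subseteq> V \<and> card F = n \<and>
     (\<forall>w\<in>V - F. even (card {f\<in>F. w < f}))"

definition upper_facet :: "nat \<Rightarrow> nat set \<Rightarrow> nat set \<Rightarrow> bool" where
  "upper_facet n V F \<longleftrightarrow> F \<subseteq> V \<and> card F = n \<and>
     (\<forall>w\<in>V - F. odd (card {f\<in>F. w < f}))"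

definition lower_triang :: "nat \<Rightarrow> nat set \<Rightarrow> nat set set" where
  "lower_triang n U = {S. lower_facet (n + 1) U S}"

definition nu :: "nat \<Rightarrow> nat \<Rightarrow> nat set set" where
  "nu m d = {A. A \<subseteq> {1..m} \<and> card A = d + 1 \<and>
     \<not> (\<exists>F. (lower_facet (2*d+1) {1..m} F \<or> upper_facet (2*d+1) {1..m} F) \<and> A \<subseteq> F)}"

definition simp_of :: "nat \<Rightarrow> nat \<Rightarrow> nat set set \<Rightarrow> nat set set" where
  "simp_of m d T = {A \<in> nu m d. \<exists>S\<in>T. A \<subseteq> S}"

definition wr :: "nat set \<Rightarrow> nat set \<Rightarrow> bool" where
  "wr X Y \<longleftrightarrow> finite X \<and> finite Y \<and> card Y = card X + 1 \<and>
     (\<forall>i < card X. sorted_list_of_set Y ! i < sorted_list_of_set X ! i \<and>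
                    sorted_list_of_set X ! i < sorted_list_of_set Y ! (i + 1))"

definition mutable :: "(nat \<Rightarrow> real) \<Rightarrow> nat \<Rightarrow> nat \<Rightarrow> nat set set \<Rightarrow> nat set \<Rightarrow> nat set \<Rightarrow> bool" where
  "mutable t m d T A B \<longleftrightarrow>
     A \<in> simp_of m d T \<and> B \<subseteq> {1..m} \<and> card B = d + 2 \<and> wr A B \<and>
     triangulation t (2*d+1) (A \<union> B) {S\<in>T. S \<subseteq> A \<union> B} \<and>
     {S\<in>T. S \<subseteq> A \<union> B} = lower_triang (2*d+1) (A \<union> B)"

definition is_support :: "nat \<Rightarrow> nat \<Rightarrow> nat set set \<Rightarrow> nat set \<Rightarrow> nat set \<Rightarrow> bool" where
  "is_support m d X A \<Sigma> \<longleftrightarrow> card \<Sigma> = d \<and> wr \<Sigma> A \<and>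
     (\<forall>C\<in>nu m d. C \<subseteq> A \<union> \<Sigma> \<longrightarrow> C \<in> X)"

end

theory Submission
  imports Defs "HOL-Computational_Algebra.Polynomial"
begin


lemma vand_indep:
  fixes \<tau> \<mu> :: "nat \<Rightarrow> real" and S :: "nat set"
  assumes fin: "finite S" and inj: "inj_on \<tau> S" and cardS: "card S \<le> n + 1"
    and sums: "\<And>i. i \<le> n \<Longrightarrow> (\<Sum>u\<in>S. \<mu> u * \<tau> u ^ i) = 0"
    and v: "v \<in> S"
  shows "\<mu> v = 0"
proof -
  define p where "p = (\<Prod>w\<in>S-{v}. [:-\<tau> w, 1:])"
  have degp: "degree p = card (S - {v})"
    unfolding p_def by (subst degree_prod_eq_sum_degree) auto
  have degn: "degree p \<le> n" using degp cardS fin v by (simp add: card_Diff_singleton)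
  have "(\<Sum>u\<in>S. \<mu> u * poly p (\<tau> u)) = (\<Sum>u\<in>S. \<Sum>k\<le>degree p. coeff p k * (\<mu> u * \<tau> u ^ k))"
    by (simp add: poly_altdef sum_distrib_left algebra_simps)
  also have "\<dots> = (\<Sum>k\<le>degree p. coeff p k * (\<Sum>u\<in>S. \<mu> u * \<tau> u ^ k))"
    by (subst sum.swap) (simp add: sum_distrib_left)
  also have "\<dots> = 0" using degn sums by (intro sum.neutral) auto
  finally have s0: "(\<Sum>u\<in>S. \<mu> u * poly p (\<tau> u)) = 0" .
  have pz: "poly p (\<tau> u) = 0" if "u \<in> S" "u \<noteq> v" for u
    unfolding p_def poly_prod using that fin by (subst prod_zero_iff) auto
  have "(\<Sum>u\<in>S. \<mu> u * poly p (\<tau> u)) = \<mu> v * poly p (\<tau> v)"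
    using fin v pz by (subst sum.remove[OF fin v]) (auto intro!: sum.neutral)
  moreover have "poly p (\<tau> v) \<noteq> 0"
    unfolding p_def poly_prod using fin inj v by (auto simp: inj_on_def)
  ultimately show ?thesis using s0 by simp
qed

lemma radon_sum:
  fixes \<tau> :: "nat \<Rightarrow> real"
  assumes inj: "inj_on \<tau> {..<N}" and iN: "i + 2 \<le> N"
  shows "(\<Sum>k<N. \<tau> k ^ i / (\<Prod>j\<in>{..<N}-{k}. (\<tau> k - \<tau> j))) = 0"
proof -
  define L where "L k = (\<Prod>j\<in>{..<N}-{k}. [:-\<tau> j, 1:])" for k
  define lam where "lam k = 1 / (\<Prod>j\<in>{..<N}-{k}. (\<tau> k - \<tau> j))" for k
  define Q where "Q = (\<Sum>k<N. smult (\<tau> k ^ i * lam k) (L k)) - monom 1 i"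
  have degL: "degree (L k) = N - 1" if "k < N" for k
    unfolding L_def using that by (subst degree_prod_eq_sum_degree) auto
  have lcL: "coeff (L k) (N - 1) = 1" if "k < N" for k
  proof -
    have "coeff (L k) (N - 1) = lead_coeff (L k)" using degL[OF that] by simp
    also have "\<dots> = 1" unfolding L_def lead_coeff_prod by simp
    finally show ?thesis .
  qed
  have polyL: "poly (L k) (\<tau> l) = (if l = k then (\<Prod>j\<in>{..<N}-{k}. (\<tau> k - \<tau> j)) else 0)"
    if "k < N" "l < N" for k l
  proof (cases "l = k")
    case True then show ?thesis unfolding L_def poly_prod by simp
  next
    case False
    then have "l \<in> {..<N}-{k}" using that by auto
    then show ?thesis unfolding L_def poly_prod using False by (auto simp: prod_zero_iff intro!: bexI[of _ l])
  qed
  have nz: "(\<Prod>j\<in>{..<N}-{k}. (\<tau> k - \<tau> j)) \<noteq> 0" if "k < N" for k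
    using inj that by (auto simp: inj_on_def)
  have roots: "poly Q (\<tau> l) = 0" if "l < N" for l
  proof -
    have "poly Q (\<tau> l) = (\<Sum>k<N. \<tau> k ^ i * lam k * poly (L k) (\<tau> l)) - \<tau> l ^ i"
      unfolding Q_def by (simp add: poly_sum poly_monom)
    also have "(\<Sum>k<N. \<tau> k ^ i * lam k * poly (L k) (\<tau> l)) = \<tau> l ^ i * lam l * poly (L l) (\<tau> l)"
      using that polyL by (subst sum.remove[of _ l]) (auto intro!: sum.neutral)
    also have "\<dots> = \<tau> l ^ i" using polyL[OF that that] nz[OF that] by (simp add: lam_def)
    finally show ?thesis by simp
  qed
  have degQ: "degree Q \<le> N - 1"
    unfolding Q_def
    apply (rule degree_diff_le)
     apply (rule degree_sum_le)
      apply simp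
     apply (rule order.trans[OF degree_smult_le])
     apply (simp add: degL)
    using iN by (simp add: degree_monom_eq)
  have Q0: "Q = 0"
  proof (rule ccontr)
    assume "Q \<noteq> 0"
    then have "card {x. poly Q x = 0} \<le> degree Q" by (rule card_poly_roots_bound)
    moreover have "\<tau> ` {..<N} \<subseteq> {x. poly Q x = 0}" using roots by auto
    then have "card (\<tau> ` {..<N}) \<le> card {x. poly Q x = 0}"
      using poly_roots_finite[OF \<open>Q \<noteq> 0\<close>] by (intro card_mono) auto
    moreover have "card (\<tau> ` {..<N}) = N" using inj by (simp add: card_image)
    ultimately show False using degQ iN by linarith
  qed
  have "coeff Q (N - 1) = (\<Sum>k<N. \<tau> k ^ i * lam k)"
    unfolding Q_def using iN lcL by (simp add: coeff_sum coeff_monom)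
  with Q0 show ?thesis by (simp add: lam_def)
qed




lemma sign_prod:
  fixes \<tau> :: "nat \<Rightarrow> real"
  assumes mono: "\<And>j k. j < k \<Longrightarrow> k < N \<Longrightarrow> \<tau> j < \<tau> k" and k: "k < N"
  shows "(-1) ^ (N - 1 - k) * (\<Prod>j\<in>{..<N}-{k}. (\<tau> k - \<tau> j)) > 0"
proof -
  have split: "{..<N}-{k} = {..<k} \<union> {k<..<N}" using k by auto
  have "(\<Prod>j\<in>{..<N}-{k}. (\<tau> k - \<tau> j)) = (\<Prod>j\<in>{..<k}. (\<tau> k - \<tau> j)) * (\<Prod>j\<in>{k<..<N}. (\<tau> k - \<tau> j))"
    unfolding split by (rule prod.union_disjoint) auto
  moreover have "(\<Prod>j\<in>{k<..<N}. (\<tau> k - \<tau> j)) = (\<Prod>j\<in>{k<..<N}. (-1) * (\<tau> j - \<tau> k))"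
    by (intro prod.cong) auto
  moreover have "\<dots> = (-1) ^ (N - 1 - k) * (\<Prod>j\<in>{k<..<N}. (\<tau> j - \<tau> k))"
    unfolding prod.distrib by simp
  moreover have "(\<Prod>j\<in>{..<k}. (\<tau> k - \<tau> j)) > 0"
    using mono k by (intro prod_pos) auto
  moreover have "(\<Prod>j\<in>{k<..<N}. (\<tau> j - \<tau> k)) > 0"
    using mono k by (intro prod_pos) auto
  moreover have "(-1::real) ^ (N - 1 - k) * (-1) ^ (N - 1 - k) = 1"
    by (simp flip: power_add)
  ultimately show ?thesis
    by (metis (no_types, lifting) mult.assoc mult.left_commute mult_1 mult_pos_pos)
qed

lemma mem_cconv:
  assumes fin: "finite S" and sub: "Y \<subseteq> S" and pos: "\<And>v. v \<in> Y \<Longrightarrow> 0 \<le> \<beta> v"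
    and s1: "(\<Sum>v\<in>Y. \<beta> v) = 1"
  shows "(\<lambda>i. \<Sum>v\<in>Y. \<beta> v * mpt t n v i) \<in> cconv t n S"
proof -
  define u where "u v = (if v \<in> Y then \<beta> v else 0)" for v
  have eq: "(\<Sum>v\<in>S. u v * g v) = (\<Sum>v\<in>Y. \<beta> v * g v)" for g :: "nat \<Rightarrow> real"
  proof -
    have "(\<Sum>v\<in>S. u v * g v) = (\<Sum>v\<in>S. if v \<in> Y then \<beta> v * g v else 0)"
      by (intro sum.cong) (auto simp: u_def)
    also have "\<dots> = (\<Sum>v\<in>S \<inter> Y. \<beta> v * g v)" using fin by (rule sum.inter_restrict[symmetric])
    also have "S \<inter> Y = Y" using sub by auto
    finally show ?thesis .
  qed
  have "(\<Sum>v\<in>S. u v) = 1" using eq[of "\<lambda>_. 1"] s1 by simp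
  moreover have "\<forall>v\<in>S. 0 \<le> u v" using pos by (auto simp: u_def)
  moreover have "(\<lambda>i. \<Sum>v\<in>Y. \<beta> v * mpt t n v i) = (\<lambda>i. \<Sum>v\<in>S. u v * mpt t n v i)"
    using eq by simp
  ultimately show ?thesis unfolding cconv_def by blast
qed

lemma one_side:
  assumes tri: "triangulation t n V T" and inj: "inj_on t V"
    and S: "S \<in> T" and S': "S' \<in> T" and XS: "X \<subseteq> S"
    and pos: "\<And>v. v \<in> X \<Longrightarrow> 0 < \<alpha> v" and s1: "(\<Sum>v\<in>X. \<alpha> v) = 1"
    and xin: "(\<lambda>i. \<Sum>v\<in>X. \<alpha> v * mpt t n v i) \<in> cconv t n S'"
  shows "X \<subseteq> S'"
proof -
  have SV: "S \<subseteq> V" and cS: "card S = n + 1" and finV: "finite V"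
    using tri S unfolding triangulation_def by auto
  then have finS: "finite S" by (meson finite_subset)
  have finX: "finite X" using XS finS by (meson finite_subset)
  define x where "x = (\<lambda>i. \<Sum>v\<in>X. \<alpha> v * mpt t n v i)"
  have "x \<in> cconv t n S" unfolding x_def using finS XS pos s1 by (intro mem_cconv) (auto intro: less_imp_le)
  then have "x \<in> cconv t n S \<inter> cconv t n S'" using xin unfolding x_def by auto
  then have "x \<in> cconv t n (S \<inter> S')" using tri S S' unfolding triangulation_def by metis
  then obtain \<gamma> where g0: "\<forall>v\<in>S \<inter> S'. 0 \<le> \<gamma> v" and g1: "(\<Sum>v\<in>S \<inter> S'. \<gamma> v) = 1"
    and gx: "x = (\<lambda>i. \<Sum>v\<in>S \<inter> S'. \<gamma> v * mpt t n v i)"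
    unfolding cconv_def by blast
  define \<mu> where "\<mu> v = (if v \<in> X then \<alpha> v else 0) - (if v \<in> S \<inter> S' then \<gamma> v else 0)" for v
  have r1: "(\<Sum>v\<in>S. (if v \<in> X then \<alpha> v else 0) * g v) = (\<Sum>v\<in>X. \<alpha> v * g v)" for g :: "nat \<Rightarrow> real"
  proof -
    have "(\<Sum>v\<in>S. (if v \<in> X then \<alpha> v else 0) * g v) = (\<Sum>v\<in>S. if v \<in> X then \<alpha> v * g v else 0)"
      by (intro sum.cong) auto
    also have "\<dots> = (\<Sum>v\<in>S \<inter> X. \<alpha> v * g v)" using finS by (rule sum.inter_restrict[symmetric])
    also have "S \<inter> X = X" using XS by auto
    finally show ?thesis .
  qed
  have r2: "(\<Sum>v\<in>S. (if v \<in> S \<inter> S' then \<gamma> v else 0) * g v) = (\<Sum>v\<in>S \<inter> S'. \<gamma> v * g v)" for g :: "nat \<Rightarrow> real"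
  proof -
    have "(\<Sum>v\<in>S. (if v \<in> S \<inter> S' then \<gamma> v else 0) * g v) = (\<Sum>v\<in>S. if v \<in> S \<inter> S' then \<gamma> v * g v else 0)"
      by (intro sum.cong) auto
    also have "\<dots> = (\<Sum>v\<in>S \<inter> (S \<inter> S'). \<gamma> v * g v)" using finS by (rule sum.inter_restrict[symmetric])
    also have "S \<inter> (S \<inter> S') = S \<inter> S'" by auto
    finally show ?thesis .
  qed
  have sums: "(\<Sum>v\<in>S. \<mu> v * t v ^ i) = 0" if "i \<le> n" for i
  proof -
    have "(\<Sum>v\<in>S. \<mu> v * t v ^ i) = (\<Sum>v\<in>X. \<alpha> v * t v ^ i) - (\<Sum>v\<in>S \<inter> S'. \<gamma> v * t v ^ i)"
      unfolding \<mu>_def left_diff_distrib sum_subtractf r1 r2 by simp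
    also have "\<dots> = 0"
    proof (cases "i = 0")
      case True then show ?thesis using s1 g1 by simp
    next
      case False
      have mp: "mpt t n v i = t v ^ i" for v using False that by (simp add: mpt_def)
      have e1: "x i = (\<Sum>v\<in>X. \<alpha> v * mpt t n v i)" unfolding x_def by simp
      have e2: "x i = (\<Sum>v\<in>S \<inter> S'. \<gamma> v * mpt t n v i)" using gx by simp
      show ?thesis using e1 e2 by (simp add: mp)
    qed
    finally show ?thesis .
  qed
  have "inj_on t S" using inj SV by (rule inj_on_subset)
  then have mu0: "\<mu> v = 0" if "v \<in> S" for v
    using vand_indep[OF finS \<open>inj_on t S\<close> _ sums that, of n] cS by simp
  show ?thesis
  proof
    fix v assume "v \<in> X"
    then have "v \<in> S" "0 < \<alpha> v" using XS pos by auto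
    with mu0[OF this(1)] \<open>v \<in> X\<close> show "v \<in> S'" unfolding \<mu>_def by (auto split: if_splits)
  qed
qed

lemma sum_split_parity:
  "(\<Sum>k<2*d+3. f k) = (\<Sum>j\<le>d+1. f (2*j)) + (\<Sum>j\<le>d. f (2*j+1))" for f :: "nat \<Rightarrow> real"
proof (induction d)
  case 0
  then show ?case by (simp add: numeral_3_eq_3 lessThan_Suc numeral_2_eq_2)
next
  case (Suc d)
  have "2 * Suc d + 3 = Suc (Suc (2*d+3))" by simp
  then show ?case using Suc by (simp only: lessThan_Suc atMost_Suc sum.insert finite_lessThan finite_atMost) (auto simp: algebra_simps eval_nat_numeral)
qed

lemma cross_false:
  assumes tri: "triangulation t (2*d+1) {1..m} T" and mono: "strict_mono_on {1..m} t"
    and wmono: "\<And>k. k < 2*d+2 \<Longrightarrow> w k < w (Suc k)"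
    and wrange: "\<And>k. k \<le> 2*d+2 \<Longrightarrow> w k \<in> {1..m}"
    and S: "S \<in> T" and S': "S' \<in> T"
    and oddS: "\<And>j. j \<le> d \<Longrightarrow> w (2*j+1) \<in> S" and evenS: "\<And>j. j \<le> d+1 \<Longrightarrow> w (2*j) \<in> S'"
  shows False
proof -
  define N where "N = 2*d+3"
  define n where "n = 2*d+1"
  have wlt: "j < k \<Longrightarrow> k < N \<Longrightarrow> w j < w k" for j k
  proof (induction k)
    case 0 then show ?case by simp
  next
    case (Suc k)
    then have "w k < w (Suc k)" using wmono unfolding N_def by simp
    then show ?case using Suc by (cases "j = k") auto
  qed
  have wr: "k < N \<Longrightarrow> w k \<in> {1..m}" for k using wrange unfolding N_def by simp
  define \<tau> where "\<tau> k = t (w k)" for k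
  have tlt: "j < k \<Longrightarrow> k < N \<Longrightarrow> \<tau> j < \<tau> k" for j k
    unfolding \<tau>_def using wr[of j] wr[of k] wlt[of j k]
    by (intro strict_mono_onD[OF mono]) auto
  have injw: "inj_on w {..<N}"
    by (rule inj_onI) (metis lessThan_iff linorder_neqE_nat wlt order_less_irrefl)
  have injt: "inj_on \<tau> {..<N}"
    by (rule inj_onI) (metis lessThan_iff linorder_neqE_nat tlt order_less_irrefl)
  define P where "P k = (\<Prod>j\<in>{..<N}-{k}. (\<tau> k - \<tau> j))" for k
  have sgn: "(-1) ^ (N - 1 - k) * P k > 0" if "k < N" for k
    unfolding P_def using sign_prod[of N \<tau> k] tlt that by blast
  have Pev: "P (2*j) > 0" if "j \<le> d+1" for j
  proof -
    have "even (N - 1 - 2*j)" using that unfolding N_def by auto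
    then show ?thesis using sgn[of "2*j"] that unfolding N_def by simp
  qed
  have Pod: "P (2*j+1) < 0" if "j \<le> d" for j
  proof -
    have "odd (N - 1 - (2*j+1))" using that unfolding N_def by presburger
    then show ?thesis using sgn[of "2*j+1"] that unfolding N_def by simp
  qed
  have rad: "(\<Sum>j\<le>d+1. \<tau> (2*j) ^ i / P (2*j)) + (\<Sum>j\<le>d. \<tau> (2*j+1) ^ i / P (2*j+1)) = 0"
    if "i \<le> n" for i
    using radon_sum[OF injt, of i] that sum_split_parity[of "\<lambda>k. \<tau> k ^ i / P k" d]
    unfolding N_def n_def P_def by simp
  define s where "s = (\<Sum>j\<le>d+1. 1 / P (2*j))"
  have spos: "s > 0" unfolding s_def
    by (rule sum_pos) (auto intro: Pev)
  define \<theta> where "\<theta> k = (if even k then 1 / P k else - 1 / P k) / s" for k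
  have th_ev: "\<theta> (2*j) = 1 / P (2*j) / s" for j by (simp add: \<theta>_def)
  have th_od: "\<theta> (Suc (2*j)) = - 1 / P (Suc (2*j)) / s" for j by (simp add: \<theta>_def)
  have eqsum: "(\<Sum>j\<le>d+1. \<theta> (2*j) * \<tau> (2*j) ^ i) = (\<Sum>j\<le>d. \<theta> (2*j+1) * \<tau> (2*j+1) ^ i)"
    if "i \<le> n" for i
  proof -
    have "(\<Sum>j\<le>d+1. \<theta> (2*j) * \<tau> (2*j) ^ i) = (\<Sum>j\<le>d+1. \<tau> (2*j) ^ i / P (2*j)) / s"
      unfolding sum_divide_distrib by (rule sum.cong) (simp_all add: th_ev)
    moreover have "(\<Sum>j\<le>d. \<theta> (2*j+1) * \<tau> (2*j+1) ^ i) = (\<Sum>j\<le>d. - (\<tau> (2*j+1) ^ i / P (2*j+1)) / s)"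
      by (rule sum.cong) (simp_all add: th_od)
    moreover have "(\<Sum>j\<le>d. - (\<tau> (2*j+1) ^ i / P (2*j+1)) / s) = - (\<Sum>j\<le>d. \<tau> (2*j+1) ^ i / P (2*j+1)) / s"
      unfolding sum_divide_distrib[symmetric] sum_negf by simp
    ultimately have e1: "(\<Sum>j\<le>d+1. \<theta> (2*j) * \<tau> (2*j) ^ i) = (\<Sum>j\<le>d+1. \<tau> (2*j) ^ i / P (2*j)) / s"
      and e2: "(\<Sum>j\<le>d. \<theta> (2*j+1) * \<tau> (2*j+1) ^ i) = - (\<Sum>j\<le>d. \<tau> (2*j+1) ^ i / P (2*j+1)) / s"
      by simp_all
    have aux: "\<And>a b A B. a = A/s \<Longrightarrow> b = -B/s \<Longrightarrow> A + B = 0 \<Longrightarrow> a = (b::real)"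
      by (simp add: add_eq_0_iff)
    show ?thesis by (rule aux[OF e1 e2 rad[OF that]])
  qed
  have sumY: "(\<Sum>j\<le>d+1. \<theta> (2*j)) = 1"
  proof -
    have "(\<Sum>j\<le>d+1. \<theta> (2*j)) = (\<Sum>j\<le>d+1. 1 / P (2*j)) / s"
      unfolding sum_divide_distrib by (rule sum.cong) (simp_all add: th_ev)
    then show ?thesis using spos unfolding s_def[symmetric] by simp
  qed
  have sumX: "(\<Sum>j\<le>d. \<theta> (2*j+1)) = 1"
    using eqsum[of 0] sumY unfolding n_def by simp
  have thpos_ev: "\<theta> (2*j) > 0" if "j \<le> d+1" for j
    using Pev[OF that] spos by (simp add: th_ev)
  have thpos_od: "\<theta> (2*j+1) > 0" if "j \<le> d" for j
    using Pod[OF that] spos by (simp add: th_od mult_neg_pos)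
  define \<alpha> where "\<alpha> v = \<theta> (the_inv_into {..<N} w v)" for v
  have \<alpha>w: "\<alpha> (w k) = \<theta> k" if "k < N" for k
    unfolding \<alpha>_def using the_inv_into_f_f[OF injw] that by simp
  define X where "X = (\<lambda>j. w (2*j+1)) ` {..d}"
  define Y where "Y = (\<lambda>j. w (2*j)) ` {..d+1}"
  have injX: "inj_on (\<lambda>j. w (2*j+1)) {..d}"
    using injw unfolding inj_on_def N_def by fastforce
  have injY: "inj_on (\<lambda>j. w (2*j)) {..d+1}"
    using injw unfolding inj_on_def N_def by fastforce
  have sX: "(\<Sum>v\<in>X. \<alpha> v * g v) = (\<Sum>j\<le>d. \<theta> (2*j+1) * g (w (2*j+1)))" for g :: "nat \<Rightarrow> real"
    unfolding X_def using injX \<alpha>w unfolding N_def by (simp add: sum.reindex)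
  have sY: "(\<Sum>v\<in>Y. \<alpha> v * g v) = (\<Sum>j\<le>d+1. \<theta> (2*j) * g (w (2*j)))" for g :: "nat \<Rightarrow> real"
    unfolding Y_def using injY \<alpha>w unfolding N_def by (simp add: sum.reindex)
  have xeq: "(\<lambda>i. \<Sum>v\<in>X. \<alpha> v * mpt t n v i) = (\<lambda>i. \<Sum>v\<in>Y. \<alpha> v * mpt t n v i)"
  proof
    fix i
    show "(\<Sum>v\<in>X. \<alpha> v * mpt t n v i) = (\<Sum>v\<in>Y. \<alpha> v * mpt t n v i)"
    proof (cases "1 \<le> i \<and> i \<le> n")
      case True
      then show ?thesis using eqsum[of i] unfolding sX sY by (simp add: mpt_def \<tau>_def)
    next
      case False
      then have "mpt t n v i = 0" for v unfolding mpt_def by auto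
      then show ?thesis by simp
    qed
  qed
  have XS: "X \<subseteq> S" using oddS unfolding X_def by auto
  have YS': "Y \<subseteq> S'" using evenS unfolding Y_def by auto
  have apX: "\<And>v. v \<in> X \<Longrightarrow> 0 < \<alpha> v" unfolding X_def using \<alpha>w thpos_od unfolding N_def by auto
  have apY: "\<And>v. v \<in> Y \<Longrightarrow> 0 < \<alpha> v" unfolding Y_def using \<alpha>w thpos_ev unfolding N_def by auto
  have a1X: "(\<Sum>v\<in>X. \<alpha> v) = 1" using sX[of "\<lambda>_. 1"] sumX by simp
  have a1Y: "(\<Sum>v\<in>Y. \<alpha> v) = 1" using sY[of "\<lambda>_. 1"] sumY by simp
  have trin: "triangulation t n {1..m} T" using tri unfolding n_def .
  have injV: "inj_on t {1..m}" using mono by (rule strict_mono_on_imp_inj_on)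
  have finS: "finite S" "finite S'" using tri S S' unfolding triangulation_def by (auto intro: finite_subset)
  have "(\<lambda>i. \<Sum>v\<in>X. \<alpha> v * mpt t n v i) \<in> cconv t n S'"
    unfolding xeq using finS YS' apY a1Y by (intro mem_cconv) (auto intro: less_imp_le)
  then have XS': "X \<subseteq> S'" using one_side[OF trin injV S S' XS apX a1X] by simp
  have "(\<lambda>i. \<Sum>v\<in>Y. \<alpha> v * mpt t n v i) \<in> cconv t n S"
    unfolding xeq[symmetric] using finS XS apX a1X by (intro mem_cconv) (auto intro: less_imp_le)
  then have YS: "Y \<subseteq> S" using one_side[OF trin injV S' S YS' apY a1Y] by simp
  have disj: "X \<inter> Y = {}"
  proof -
    have "w (2*j+1) \<noteq> w (2*j')" if "j \<le> d" "j' \<le> d+1" for j j'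
    proof
      assume "w (2*j+1) = w (2*j')"
      then have "2*j+1 = 2*j'" using injw that unfolding inj_on_def N_def by auto
      then show False by presburger
    qed
    then show ?thesis unfolding X_def Y_def by auto
  qed
  have "card (X \<union> Y) = card X + card Y" using disj by (simp add: card_Un_disjoint X_def Y_def)
  also have "\<dots> = 2*d+3" unfolding X_def Y_def using injX injY by (simp add: card_image)
  finally have cXY: "card (X \<union> Y) = 2*d+3" .
  have "card (X \<union> Y) \<le> card S" using XS YS finS by (intro card_mono) auto
  moreover have "card S = 2*d+2" using tri S unfolding triangulation_def by auto
  ultimately show False using cXY by simp
qed




lemma mono_upto:
  assumes "\<And>k. k < n \<Longrightarrow> (w::nat\<Rightarrow>nat) k < w (Suc k)"
  shows "j < k \<Longrightarrow> k \<le> n \<Longrightarrow> w j < w k"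
proof (induction k)
  case 0 then show ?case by simp
next
  case (Suc k)
  then have "w k < w (Suc k)" using assms by simp
  then show ?case using Suc by (cases "j = k") auto
qed

lemma enum_set:
  assumes "finite X"
  shows "X = (\<lambda>k. sorted_list_of_set X ! k) ` {..<card X}"
proof -
  have "X = set (sorted_list_of_set X)" using assms by simp
  also have "\<dots> = (\<lambda>k. sorted_list_of_set X ! k) ` {..<card X}"
    by (simp add: set_conv_nth image_def) (auto simp: assms)
  finally show ?thesis .
qed

lemma enum_less:
  assumes "finite X" "i < j" "j < card X"
  shows "sorted_list_of_set X ! i < sorted_list_of_set X ! j"
  using assms sorted_wrt_nth_less[of "(<)" "sorted_list_of_set X" i j]
  by simp

lemma sorted_image:
  assumes "\<And>i j. i < j \<Longrightarrow> j < n \<Longrightarrow> (f::nat\<Rightarrow>nat) i < f j"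
  shows "sorted_list_of_set (f ` {..<n}) = map f [0..<n]"
proof -
  have s1: "sorted_wrt (<) (map f [0..<n])"
    using assms by (auto simp: sorted_wrt_iff_nth_less)
  have s2: "sorted_wrt (<) (sorted_list_of_set (f ` {..<n}))" by simp
  have "set (map f [0..<n]) = f ` {..<n}" by auto
  then have "set (sorted_list_of_set (f ` {..<n})) = set (map f [0..<n])" by simp
  then show ?thesis using strict_sorted_equal[OF s1 s2] by simp
qed




lemma card_Int_Suc:
  assumes "finite F"
  shows "card (F \<inter> {1..Suc y}) = card (F \<inter> {1..y}) + (if Suc y \<in> F then 1 else 0)"
proof -
  have e: "{1..Suc y} = insert (Suc y) {1..y}" by (auto)
  show ?thesis
  proof (cases "Suc y \<in> F")
    case True
    then have "F \<inter> {1..Suc y} = insert (Suc y) (F \<inter> {1..y})" using e by auto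
    then show ?thesis using True assms by simp
  next
    case False
    then have "F \<inter> {1..Suc y} = F \<inter> {1..y}" using e by auto
    then show ?thesis using False by simp
  qed
qed

lemma no_facet_aux:
  fixes F C :: "nat set"
  assumes FV: "F \<subseteq> {1..m}" and par: "\<And>x y. x \<in> {1..m} - F \<Longrightarrow> y \<in> {1..m} - F \<Longrightarrow>
        even (card {f\<in>F. x < f}) = even (card {f\<in>F. y < f})"
    and CF: "C \<subseteq> F"
    and gap: "\<And>c. c \<in> C \<Longrightarrow> 2 \<le> c \<and> c + 1 \<le> m \<and> c + 1 \<notin> C"
    and cards: "card F < 2 * card C" and Cne: "C \<noteq> {}"
  shows False
proof -
  have finF: "finite F" using FV by (meson finite_atLeastAtMost finite_subset)
  have finC: "finite C" using CF finF by (meson finite_subset)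
  define \<psi> where "\<psi> y = card (F \<inter> {1..y})" for y
  define R where "R y = card (C \<inter> {1..y})" for y
  have psiS: "\<psi> (Suc y) = \<psi> y + (if Suc y \<in> F then 1 else 0)" for y
    unfolding \<psi>_def using card_Int_Suc[OF finF] .
  have RS: "R (Suc y) = R y + (if Suc y \<in> C then 1 else 0)" for y
    unfolding R_def using card_Int_Suc[OF finC] .
  have cutpar: "even (\<psi> x) = even (\<psi> y)" if "x \<in> {1..m} - F" "y \<in> {1..m} - F" for x y
  proof -
    have cnt: "card {f\<in>F. z < f} = card F - \<psi> z" if "z \<in> {1..m}" for z
    proof -
      have "{f\<in>F. z < f} = F - (F \<inter> {1..z})" using FV by auto
      then show ?thesis unfolding \<psi>_def using finF by (simp add: card_Diff_subset)
    qed
    have le: "\<psi> z \<le> card F" for z unfolding \<psi>_def using finF by (simp add: card_mono)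
    show ?thesis using par[OF that] cnt[of x] cnt[of y] that le[of x] le[of y] by auto
  qed
  define Inv where "Inv y \<longleftrightarrow>
    (int (\<psi> y) = int y \<and> int (\<psi> y) - 2 * int (R y) \<ge> (if odd y then 1 else if y \<in> C then 0 else 2)) \<or>
    (\<exists>x. 1 \<le> x \<and> x \<le> y \<and> x \<notin> F \<and> int (\<psi> y) = int (\<psi> x) + int (y - x) \<and>
       int (\<psi> y) - 2 * int (R y) \<ge> (if y \<in> C then (if odd (y - x) then -1 else 0) else (if odd (y - x) then 1 else 0)))"
    for y
  have inv: "1 \<le> y \<Longrightarrow> y \<le> m \<Longrightarrow> Inv y" for y
  proof (induction y)
    case 0 then show ?case by simp
  next
    case (Suc y)
    show ?case
    proof (cases "y = 0")
      case True
      have p1: "\<psi> 1 = (if 1 \<in> F then 1 else 0)" using psiS[of 0] by (simp add: \<psi>_def)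
      have r1: "R 1 = 0" using RS[of 0] gap by (force simp: R_def)
      have "1 \<notin> C" using gap by force
      show ?thesis
      proof (cases "1 \<in> F")
        case True then show ?thesis using p1 r1 \<open>y = 0\<close> \<open>1 \<notin> C\<close> unfolding Inv_def by simp
      next
        case False then show ?thesis using p1 r1 \<open>y = 0\<close> Suc.prems unfolding Inv_def
          by (intro disjI2 exI[of _ 1]) simp
      qed
    next
      case False
      then have IH: "Inv y" using Suc by simp
      have gy: "Suc y \<in> C \<Longrightarrow> y \<notin> C" using gap by force
      show ?thesis
      proof (cases "Suc y \<in> F")
        case nf: False
        then have nc: "Suc y \<notin> C" using CF by auto
        have ps: "\<psi> (Suc y) = \<psi> y" "R (Suc y) = R y" using psiS[of y] RS[of y] nf nc by auto
        have "int (\<psi> y) - 2 * int (R y) \<ge> 0"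
          using IH unfolding Inv_def
        proof (elim disjE exE conjE)
          fix x assume x: "1 \<le> x" "x \<le> y" "x \<notin> F" and e: "int (\<psi> y) = int (\<psi> x) + int (y - x)"
            and g: "(if y \<in> C then (if odd (y - x) then -1 else 0) else (if odd (y - x) then 1 else 0)) \<le> int (\<psi> y) - 2 * int (R y)"
          have "even (\<psi> x) = even (\<psi> (Suc y))" using cutpar[of x "Suc y"] x nf Suc.prems by auto
          then have "even (y - x)" using e ps by presburger
          then show ?thesis using g by (auto split: if_splits)
        qed (auto split: if_splits)
        then show ?thesis unfolding Inv_def using ps nf nc Suc.prems by (intro disjI2 exI[of _ "Suc y"]) simp
      next
        case inF: True
        have ps: "\<psi> (Suc y) = \<psi> y + 1" "R (Suc y) = R y + (if Suc y \<in> C then 1 else 0)"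
          using psiS[of y] RS[of y] inF by auto
        show ?thesis using IH[unfolded Inv_def]
        proof (elim disjE exE conjE)
          assume a: "int (\<psi> y) = int y" and b: "(if odd y then 1 else if y \<in> C then 0 else 2) \<le> int (\<psi> y) - 2 * int (R y)"
          have "int (\<psi> (Suc y)) = int (Suc y) \<and> (if odd (Suc y) then 1 else if Suc y \<in> C then 0 else 2) \<le> int (\<psi> (Suc y)) - 2 * int (R (Suc y))"
            using a b ps gy by (cases "Suc y \<in> C"; cases "y \<in> C"; cases "odd y") auto
          then show ?thesis unfolding Inv_def by blast
        next
          fix x assume x: "1 \<le> x" "x \<le> y" "x \<notin> F" and e: "int (\<psi> y) = int (\<psi> x) + int (y - x)"
            and g: "(if y \<in> C then (if odd (y - x) then -1 else 0) else (if odd (y - x) then 1 else 0)) \<le> int (\<psi> y) - 2 * int (R y)"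
          have s: "Suc y - x = Suc (y - x)" using x by simp
          have "int (\<psi> (Suc y)) = int (\<psi> x) + int (Suc y - x) \<and>
            (if Suc y \<in> C then (if odd (Suc y - x) then -1 else 0) else (if odd (Suc y - x) then 1 else 0)) \<le> int (\<psi> (Suc y)) - 2 * int (R (Suc y))"
            unfolding s using e g ps gy by (cases "Suc y \<in> C"; cases "y \<in> C"; cases "odd (y - x)") auto
          then show ?thesis using x unfolding Inv_def by (intro disjI2 exI[of _ x]) auto
        qed
      qed
    qed
  qed
  obtain c where c: "c \<in> C" using Cne by auto
  then have m1: "1 \<le> m" using gap by force
  have mC: "m \<notin> C" using gap by force
  have "int (\<psi> m) - 2 * int (R m) \<ge> 0"
    using inv[OF m1 order.refl] mC unfolding Inv_def by (auto split: if_splits)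
  moreover have "\<psi> m = card F" unfolding \<psi>_def using FV by (metis inf.absorb1)
  moreover have "R m = card C" unfolding R_def using CF FV by (metis inf.absorb1 order.trans)
  ultimately show False using cards by simp
qed




lemma in_nu:
  assumes wmono: "\<And>k. k < 2*d+2 \<Longrightarrow> w k < w (Suc k)"
    and wrange: "\<And>k. k \<le> 2*d+2 \<Longrightarrow> w k \<in> {1..m}"
  shows "(\<lambda>j. w (2*j+1)) ` {..d} \<in> nu m d"
proof -
  define C where "C = (\<lambda>j. w (2*j+1)) ` {..d}"
  have wlt: "j < k \<Longrightarrow> k \<le> 2*d+2 \<Longrightarrow> w j < w k" for j k using mono_upto[of "2*d+2" w] wmono by blast
  have inj: "inj_on (\<lambda>j. w (2*j+1)) {..d}"
  proof (rule inj_onI)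
    fix j j' assume j: "j \<in> {..d}" "j' \<in> {..d}" "w (2*j+1) = w (2*j'+1)"
    show "j = j'"
    proof (rule ccontr)
      assume "j \<noteq> j'"
      then have "j < j' \<or> j' < j" by arith
      then show False
      proof
        assume "j < j'" then show False using wlt[of "2*j+1" "2*j'+1"] j by simp
      next
        assume "j' < j" then show False using wlt[of "2*j'+1" "2*j+1"] j by simp
      qed
    qed
  qed
  have cardC: "card C = d + 1" unfolding C_def using inj by (simp add: card_image)
  have CV: "C \<subseteq> {1..m}" unfolding C_def using wrange by auto
  have gap: "2 \<le> c \<and> c + 1 \<le> m \<and> c + 1 \<notin> C" if cC: "c \<in> C" for c
  proof -
    obtain j where j0: "c = w (2*j+1)" "j \<in> {..d}" using cC unfolding C_def by (rule imageE)
    then have j: "j \<le> d" "c = w (2*j+1)" by auto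
    have "w (2*j) < w (2*j+1)" using wlt[of "2*j" "2*j+1"] j by simp
    moreover have "w (2*j) \<ge> 1" using wrange[of "2*j"] j by simp
    moreover have "w (2*j+1) < w (2*j+2)" using wlt[of "2*j+1" "2*j+2"] j by simp
    moreover have "w (2*j+2) \<le> m" using wrange[of "2*j+2"] j by simp
    moreover have "c + 1 \<notin> C"
    proof
      assume "c + 1 \<in> C"
      then obtain j' where j1: "c + 1 = w (2*j'+1)" "j' \<in> {..d}" unfolding C_def by (rule imageE)
      then have j': "j' \<le> d" "c + 1 = w (2*j'+1)" by auto
      show False
      proof (cases "j' \<le> j")
        case True
        have "w (2*j'+1) \<le> w (2*j+1)"
        proof (cases "j' = j")
          case True then show ?thesis by simp
        next
          case False then show ?thesis using wlt[of "2*j'+1" "2*j+1"] j \<open>j' \<le> j\<close> by simp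
        qed
        then show False using j(2) j'(2) by linarith
      next
        case False
        then have "2*j+2 < 2*j'+1" by simp
        then have "w (2*j+2) < w (2*j'+1)" using wlt[of "2*j+2" "2*j'+1"] j' by simp
        moreover have "w (2*j+1) < w (2*j+2)" using wlt[of "2*j+1" "2*j+2"] j by simp
        ultimately show False using j(2) j'(2) by linarith
      qed
    qed
    ultimately show ?thesis using j(2) by linarith
  qed
  have nofacet: False if F: "lower_facet (2*d+1) {1..m} F \<or> upper_facet (2*d+1) {1..m} F" and CF: "C \<subseteq> F" for F
  proof -
    have FV: "F \<subseteq> {1..m}" and cF: "card F = 2*d+1"
      using F unfolding lower_facet_def upper_facet_def by auto
    have par: "even (card {f\<in>F. x < f}) = even (card {f\<in>F. y < f})"
      if "x \<in> {1..m} - F" "y \<in> {1..m} - F" for x y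
      using F that unfolding lower_facet_def upper_facet_def by auto
    have "C \<noteq> {}" using cardC by auto
    then show False using no_facet_aux[OF FV par CF gap] cF cardC by simp
  qed
  have "C \<in> nu m d" unfolding nu_def using CV cardC nofacet by auto
  then show ?thesis unfolding C_def .
qed




lemma wr_nth:
  assumes "wr X Y" "i < card X"
  shows "sorted_list_of_set Y ! i < sorted_list_of_set X ! i \<and>
         sorted_list_of_set X ! i < sorted_list_of_set Y ! (i + 1)"
  using assms unfolding wr_def by blast

theorem lemma3p7:
  fixes t :: "nat \<Rightarrow> real" and m d :: nat and T :: "nat set set" and A B :: "nat set"
  assumes "strict_mono_on {1..m} t"
    and "triangulation t (2*d+1) {1..m} T"
    and "mutable t m d T A B"
  shows "is_support m d (simp_of m d T) A (B - {Min B, Max B}) \<and>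
         (\<forall>\<Sigma>. is_support m d (simp_of m d T) A \<Sigma> \<longrightarrow> \<Sigma> = B - {Min B, Max B})"
proof -
  note mono = assms(1) and tri = assms(2)
  have Anu: "A \<in> nu m d" and BV: "B \<subseteq> {1..m}" and cB: "card B = d + 2" and wrAB: "wr A B"
    and low: "{S\<in>T. S \<subseteq> A \<union> B} = lower_triang (2*d+1) (A \<union> B)"
    using assms(3) unfolding mutable_def simp_of_def by auto
  have AV: "A \<subseteq> {1..m}" and cA: "card A = d + 1" using Anu unfolding nu_def by auto
  have finA: "finite A" and finB: "finite B" using AV BV by (auto intro: finite_subset)
  define a where "a k = sorted_list_of_set A ! k" for k
  define b where "b k = sorted_list_of_set B ! k" for k
  have ab: "b i < a i \<and> a i < b (Suc i)" if "i \<le> d" for i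
    using wr_nth[OF wrAB, of i] that cA unfolding a_def b_def by simp
  have Aeq: "A = a ` {..<d+1}" using enum_set[OF finA] cA unfolding a_def by simp
  have Beq: "B = b ` {..<d+2}" using enum_set[OF finB] cB unfolding b_def by simp
  have aA: "a i \<in> A" if "i \<le> d" for i unfolding Aeq using that by auto
  have bB: "b i \<in> B" if "i \<le> d+1" for i unfolding Beq using that by auto
  have aV: "a i \<in> {1..m}" if "i \<le> d" for i using aA[OF that] AV by blast
  have bV: "b i \<in> {1..m}" if "i \<le> d+1" for i using bB[OF that] BV by blast
  define u where "u k = (if even k then b (k div 2) else a (k div 2))" for k
  have u_ev: "u (2*j) = b j" for j by (simp add: u_def)
  have u_od: "u (2*j+1) = a j" for j by (simp add: u_def)
  have u_ev2: "u (Suc (Suc (2*j))) = b (Suc j)" for j using u_ev[of "Suc j"] by simp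
  have u_od2: "u (Suc (Suc (Suc (2*j)))) = a (Suc j)" for j using u_od[of "Suc j"] by simp
  have umono: "u k < u (Suc k)" if "k < 2*d+2" for k
  proof (cases "even k")
    case True
    then obtain j where "k = 2*j" by blast
    then show ?thesis using ab[of j] that u_ev u_od by simp
  next
    case False
    then obtain j where "k = 2*j+1" using oddE by blast
    then show ?thesis using ab[of j] that u_ev[of "Suc j"] u_od by simp
  qed
  have ult: "j < k \<Longrightarrow> k \<le> 2*d+2 \<Longrightarrow> u j < u k" for j k
    using mono_upto[of "2*d+2" u] umono by blast
  have urange: "u k \<in> {1..m}" if "k \<le> 2*d+2" for k
  proof (cases "even k")
    case True
    then obtain j where "k = 2*j" by blast
    then show ?thesis using bV[of j] that u_ev by simp
  next
    case False
    then obtain j where "k = 2*j+1" using oddE by blast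
    then show ?thesis using aV[of j] that u_od by simp
  qed
  have uinj: "inj_on u {..2*d+2}"
  proof (rule inj_onI)
    fix j k assume jk: "j \<in> {..2*d+2}" "k \<in> {..2*d+2}" "u j = u k"
    show "j = k"
    proof (rule ccontr)
      assume "j \<noteq> k"
      then have "j < k \<or> k < j" by arith
      then show False using ult[of j k] ult[of k j] jk by auto
    qed
  qed
  have uneq: "j \<le> 2*d+2 \<Longrightarrow> k \<le> 2*d+2 \<Longrightarrow> j \<noteq> k \<Longrightarrow> u j \<noteq> u k" for j k
    using uinj unfolding inj_on_def by auto
  define U where "U = A \<union> B"
  have Ueq: "U = u ` {..2*d+2}"
  proof
    show "U \<subseteq> u ` {..2*d+2}"
    proof
      fix x assume "x \<in> U"
      then consider (A) j where "j \<le> d" "x = a j" | (B) j where "j \<le> d+1" "x = b j"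
      proof -
        have A': "A = a ` {..d}" and B': "B = b ` {..d+1}" using Aeq Beq lessThan_Suc_atMost
          by (metis Suc_eq_plus1, metis add_2_eq_Suc' lessThan_Suc_atMost Suc_eq_plus1)
        show ?thesis using \<open>x \<in> U\<close> that unfolding U_def A' B' by blast
      qed
      then show "x \<in> u ` {..2*d+2}"
      proof cases
        case A then show ?thesis using u_od[of j] by (intro image_eqI[of _ _ "2*j+1"]) auto
      next
        case B then show ?thesis using u_ev[of j] by (intro image_eqI[of _ _ "2*j"]) auto
      qed
    qed
  next
    show "u ` {..2*d+2} \<subseteq> U"
    proof
      fix x assume "x \<in> u ` {..2*d+2}"
      then obtain k where k: "k \<le> 2*d+2" "x = u k" by auto
      show "x \<in> U"
      proof (cases "even k")
        case True
        then obtain j where "k = 2*j" by blast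
        then show ?thesis using k u_ev unfolding U_def Beq by auto
      next
        case False
        then obtain j where "k = 2*j+1" using oddE by blast
        then show ?thesis using k u_od unfolding U_def Aeq by auto
      qed
    qed
  qed
  have cU: "card U = 2*d+3" unfolding Ueq using uinj by (simp add: card_image)
  have finU: "finite U" unfolding Ueq by simp
  have above: "{f \<in> U - {u k}. u k < f} = u ` {k<..2*d+2}" if "k \<le> 2*d+2" for k
  proof
    show "{f \<in> U - {u k}. u k < f} \<subseteq> u ` {k<..2*d+2}"
    proof
      fix f assume "f \<in> {f \<in> U - {u k}. u k < f}"
      then obtain k' where k': "k' \<le> 2*d+2" "f = u k'" "u k < u k'" unfolding Ueq by auto
      have "k < k'"
      proof (rule ccontr)
        assume "\<not> k < k'"
        then have "k' \<le> k" by simp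
        then have "u k' \<le> u k" using ult[of k' k] that by (cases "k' = k") auto
        then show False using k' by simp
      qed
      then show "f \<in> u ` {k<..2*d+2}" using k' by auto
    qed
  next
    show "u ` {k<..2*d+2} \<subseteq> {f \<in> U - {u k}. u k < f}"
    proof
      fix f assume "f \<in> u ` {k<..2*d+2}"
      then obtain k' where k': "k < k'" "k' \<le> 2*d+2" "f = u k'" by auto
      then have "u k < u k'" using ult by blast
      then show "f \<in> {f \<in> U - {u k}. u k < f}" using k' unfolding Ueq by auto
    qed
  qed
  have facetT: "U - {u (2*j)} \<in> T" if "j \<le> d+1" for j
  proof -
    have k: "2*j \<le> 2*d+2" using that by simp
    have sub: "U - {u (2*j)} \<subseteq> U" by auto
    have uin: "u (2*j) \<in> U" unfolding Ueq using k by auto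
    have c1: "card (U - {u (2*j)}) = 2*d+2" using cU uin finU by (simp add: card_Diff_singleton)
    have "card {f \<in> U - {u (2*j)}. u (2*j) < f} = 2*d+2 - 2*j"
    proof -
      have "inj_on u {2*j<..2*d+2}" using uinj by (rule inj_on_subset) auto
      then show ?thesis unfolding above[OF k] by (simp add: card_image)
    qed
    then have ev: "even (card {f \<in> U - {u (2*j)}. u (2*j) < f})" by simp
    have "lower_facet (2*d+1+1) U (U - {u (2*j)})"
      unfolding lower_facet_def using sub c1 ev uin by auto
    then have "U - {u (2*j)} \<in> lower_triang (2*d+1) U" unfolding lower_triang_def by simp
    then show ?thesis using low unfolding U_def by blast
  qed
  have uA: "u (2*j+1) \<in> A" if "j \<le> d" for j using aA[OF that] u_od by simp
  have uU: "u k \<in> U" if "k \<le> 2*d+2" for k unfolding Ueq using that by auto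
  have Bu: "\<exists>j\<le>d+1. y = u (2*j)" if "y \<in> B" for y
    using that u_ev unfolding Beq by (auto simp: less_Suc_eq_le)
  have Minb: "Min B = u 0"
  proof (rule Min_eqI[OF finB])
    show "u 0 \<in> B" using bB[of 0] u_ev[of 0] by simp
    fix y assume "y \<in> B"
    then obtain j where j: "j \<le> d+1" "y = u (2*j)" using Bu by blast
    show "u 0 \<le> y" using ult[of 0 "2*j"] j by (cases "j = 0") auto
  qed
  have Maxb: "Max B = u (2*d+2)"
  proof (rule Max_eqI[OF finB])
    show "u (2*d+2) \<in> B" using bB[of "d+1"] u_ev[of "d+1"] by (simp add: algebra_simps)
    fix y assume "y \<in> B"
    then obtain j where j: "j \<le> d+1" "y = u (2*j)" using Bu by blast
    show "y \<le> u (2*d+2)" using ult[of "2*j" "2*d+2"] j by (cases "j = d+1") auto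
  qed
  define f where "f i = u (2*i+2)" for i
  have B'eq: "B - {Min B, Max B} = f ` {..<d}"
  proof
    show "B - {Min B, Max B} \<subseteq> f ` {..<d}"
    proof
      fix y assume y: "y \<in> B - {Min B, Max B}"
      then obtain j where j: "j \<le> d+1" "y = u (2*j)" using Bu by blast
      have "y \<noteq> u 0" "y \<noteq> u (2*d+2)" using y Minb Maxb by auto
      have "j \<noteq> 0"
      proof assume "j = 0" then show False using \<open>y \<noteq> u 0\<close> j by simp qed
      moreover have "j \<noteq> d+1"
      proof assume "j = d+1" then show False using \<open>y \<noteq> u (2*d+2)\<close> j by (simp add: algebra_simps) qed
      ultimately have "j \<noteq> 0" "j \<noteq> d+1" by auto
      then obtain i where "j = Suc i" "i < d" using j by (cases j) auto
      then show "y \<in> f ` {..<d}" using j unfolding f_def by auto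
    qed
  next
    show "f ` {..<d} \<subseteq> B - {Min B, Max B}"
    proof
      fix y assume "y \<in> f ` {..<d}"
      then obtain i where i: "i < d" "y = u (2*i+2)" unfolding f_def by auto
      have "y \<in> B" using bB[of "Suc i"] u_ev[of "Suc i"] i by simp
      moreover have "y \<noteq> u 0" "y \<noteq> u (2*d+2)" using uneq i by auto
      ultimately show "y \<in> B - {Min B, Max B}" using Minb Maxb by simp
    qed
  qed
  have fmono: "f i < f j" if "i < j" "j < d" for i j unfolding f_def using ult that by simp
  have sortf: "sorted_list_of_set (f ` {..<d}) = map f [0..<d]" using sorted_image[of d f] fmono by blast
  have cf: "card (f ` {..<d}) = d"
    using length_sorted_list_of_set[of "f ` {..<d}"] sortf by simp
  have sA: "sorted_list_of_set A ! i = a i" for i unfolding a_def ..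
  have part1: "is_support m d (simp_of m d T) A (f ` {..<d})"
    unfolding is_support_def
  proof (intro conjI ballI impI)
    show "card (f ` {..<d}) = d" by (rule cf)
    have wrc: "a i < f i \<and> f i < a (i+1)" if "i < d" for i
      using ab[of i] ab[of "Suc i"] that u_ev2[of i] unfolding f_def by simp
    show "wr (f ` {..<d}) A" unfolding wr_def sortf sA cf using finA cA wrc by simp
  next
    fix C assume C: "C \<in> nu m d" "C \<subseteq> A \<union> f ` {..<d}"
    have "A \<union> f ` {..<d} \<subseteq> U - {u (2*0)}"
    proof
      fix x assume "x \<in> A \<union> f ` {..<d}"
      then consider (A) j where "j \<le> d" "x = u (2*j+1)" | (F) i where "i < d" "x = u (2*i+2)"
      proof
        assume "x \<in> A"
        then obtain j where "j < d+1" "x = a j" unfolding Aeq by blast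
        then show thesis using that(1)[of j] u_od[of j] by simp
      next
        assume "x \<in> f ` {..<d}"
        then obtain i where "i < d" "x = f i" by blast
        then show thesis using that(2)[of i] unfolding f_def by simp
      qed
      then show "x \<in> U - {u (2*0)}"
      proof cases
        case A then show ?thesis using uU[of "2*j+1"] uneq[of "2*j+1" 0] by auto
      next
        case F then show ?thesis using uU[of "2*i+2"] uneq[of "2*i+2" 0] by auto
      qed
    qed
    then have "C \<subseteq> U - {u (2*0)}" using C(2) by (rule subset_trans[rotated])
    then have "\<exists>S\<in>T. C \<subseteq> S" using facetT[of 0] by (intro bexI) auto
    then show "C \<in> simp_of m d T" unfolding simp_of_def using C(1) by simp
  qed
  have key: False
    if wm: "\<And>k. k < 2*d+2 \<Longrightarrow> w k < w (Suc k)" and wr: "\<And>k. k \<le> 2*d+2 \<Longrightarrow> w k \<in> {1..m}"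
      and wod: "\<And>j. j \<le> d \<Longrightarrow> w (2*j+1) \<in> A \<union> \<Sigma>" and jb: "jb \<le> d+1"
      and wev: "\<And>j. j \<le> d+1 \<Longrightarrow> w (2*j) \<in> U - {u (2*jb)}"
      and sup: "\<forall>C\<in>nu m d. C \<subseteq> A \<union> \<Sigma> \<longrightarrow> C \<in> simp_of m d T"
    for w \<Sigma> jb
  proof -
    define C where "C = (\<lambda>j. w (2*j+1)) ` {..d}"
    have "C \<in> nu m d" unfolding C_def using in_nu[of d w m] wm wr by blast
    moreover have "C \<subseteq> A \<union> \<Sigma>" unfolding C_def using wod by auto
    ultimately have "C \<in> simp_of m d T" using sup by blast
    then obtain S where S: "S \<in> T" "C \<subseteq> S" unfolding simp_of_def by blast
    have S': "U - {u (2*jb)} \<in> T" using facetT[OF jb] .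
    show False
    proof (rule cross_false[OF tri mono, of w, OF _ _ S(1) S'])
      show "\<And>k. k < 2*d+2 \<Longrightarrow> w k < w (Suc k)" by (rule wm)
      show "\<And>k. k \<le> 2*d+2 \<Longrightarrow> w k \<in> {1..m}" by (rule wr)
      show "\<And>j. j \<le> d \<Longrightarrow> w (2*j+1) \<in> S" using S(2) unfolding C_def by auto
      show "\<And>j. j \<le> d+1 \<Longrightarrow> w (2*j) \<in> U - {u (2*jb)}" by (rule wev)
    qed
  qed
  have part2: "\<Sigma> = f ` {..<d}" if supp: "is_support m d (simp_of m d T) A \<Sigma>" for \<Sigma>
  proof -
    have cS: "card \<Sigma> = d" and wrS: "wr \<Sigma> A" and sup: "\<forall>C\<in>nu m d. C \<subseteq> A \<union> \<Sigma> \<longrightarrow> C \<in> simp_of m d T"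
      using supp unfolding is_support_def by auto
    have finS: "finite \<Sigma>" using wrS unfolding wr_def by auto
    define \<sigma> where "\<sigma> k = sorted_list_of_set \<Sigma> ! k" for k
    have as: "a i < \<sigma> i \<and> \<sigma> i < a (Suc i)" if "i < d" for i
      using wr_nth[OF wrS, of i] that cS unfolding \<sigma>_def a_def by simp
    have Seq: "\<Sigma> = \<sigma> ` {..<d}" using enum_set[OF finS] cS unfolding \<sigma>_def by simp
    have sS: "\<sigma> i \<in> \<Sigma>" if "i < d" for i unfolding Seq using that by auto
    have sV: "\<sigma> i \<in> {1..m}" if "i < d" for i
      using as[OF that] aV[of i] aV[of "Suc i"] that by auto
    show ?thesis
    proof (rule ccontr)
      assume neq: "\<Sigma> \<noteq> f ` {..<d}"
      have "\<exists>i<d. \<sigma> i \<noteq> f i"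
      proof (rule ccontr)
        assume "\<not> (\<exists>i<d. \<sigma> i \<noteq> f i)"
        then have "\<sigma> ` {..<d} = f ` {..<d}" by (intro image_cong) auto
        then show False using neq Seq by simp
      qed
      then obtain i where i: "i < d" "\<sigma> i \<noteq> f i" by blast
      have ui1: "u (2*i+1) = a i" by (rule u_od)
      have ui2: "u (2*i+2) = f i" unfolding f_def ..
      have ui3: "u (2*i+3) = a (Suc i)" using u_od2[of i] by (simp add: eval_nat_numeral)
      show False
      proof (cases "\<sigma> i < f i")
        case lt: True
        define w where "w k = (if k = 2*i then u (2*i+1) else if k = 2*i+1 then \<sigma> i else u k)" for k
        show False
        proof (rule key[of w \<Sigma> i])
          show "w k < w (Suc k)" if "k < 2*d+2" for k
          proof -
            consider "k = 2*i" | "k = 2*i+1" | "Suc k = 2*i" | "k \<noteq> 2*i" "k \<noteq> 2*i+1" "Suc k \<noteq> 2*i" by blast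
            then show ?thesis
            proof cases
              case 1 then show ?thesis using as[OF i(1)] ui1 unfolding w_def by simp
            next
              case 2 then show ?thesis using lt ui2 unfolding w_def by simp
            next
              case 3 then show ?thesis using ult[of k "2*i+1"] that i unfolding w_def by simp
            next
              case 4 then show ?thesis using umono[OF that] unfolding w_def by simp
            qed
          qed
          show "w k \<in> {1..m}" if "k \<le> 2*d+2" for k
            using urange[of k] urange[of "2*i+1"] sV[OF i(1)] that i unfolding w_def by auto
          show "w (2*j+1) \<in> A \<union> \<Sigma>" if "j \<le> d" for j
            using uA[OF that] sS[OF i(1)] unfolding w_def by auto
          show "i \<le> d+1" using i by simp
          show "w (2*j) \<in> U - {u (2*i)}" if "j \<le> d+1" for j
          proof (cases "j = i")
            case True then show ?thesis using uU[of "2*i+1"] uneq[of "2*i+1" "2*i"] i unfolding w_def by auto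
          next
            case False then show ?thesis using uU[of "2*j"] uneq[of "2*j" "2*i"] i that unfolding w_def by auto
          qed
          show "\<forall>C\<in>nu m d. C \<subseteq> A \<union> \<Sigma> \<longrightarrow> C \<in> simp_of m d T" by (rule sup)
        qed
      next
        case False
        then have gt: "f i < \<sigma> i" using i(2) by simp
        define w where "w k = (if k = 2*i+3 then \<sigma> i else if k = 2*i+4 then u (2*i+3) else u k)" for k
        show False
        proof (rule key[of w \<Sigma> "i+2"])
          show "w k < w (Suc k)" if "k < 2*d+2" for k
          proof -
            consider "k = 2*i+2" | "k = 2*i+3" | "k = 2*i+4" | "k \<noteq> 2*i+2" "k \<noteq> 2*i+3" "k \<noteq> 2*i+4" by blast
            then show ?thesis
            proof cases
              case 1 then show ?thesis using gt ui2 unfolding w_def by simp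
            next
              case 2 then show ?thesis using as[OF i(1)] ui3 unfolding w_def by simp
            next
              case 3
              then have "Suc k = 2*i+5" by simp
              moreover have "w k = u (2*i+3)" using 3 unfolding w_def by simp
              moreover have "w (Suc k) = u (2*i+5)" using 3 unfolding w_def by (simp add: add.commute)
              ultimately show ?thesis using ult[of "2*i+3" "2*i+5"] that 3 by simp
            next
              case 4 then show ?thesis using umono[OF that] unfolding w_def by simp
            qed
          qed
          show "w k \<in> {1..m}" if "k \<le> 2*d+2" for k
            using urange[of k] urange[of "2*i+3"] sV[OF i(1)] that i unfolding w_def by auto
          show "w (2*j+1) \<in> A \<union> \<Sigma>" if "j \<le> d" for j
          proof -
            have "2*j+1 \<noteq> 2*i+4" by presburger
            then show ?thesis using uA[OF that] sS[OF i(1)] unfolding w_def by auto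
          qed
          show "i + 2 \<le> d+1" using i by simp
          show "w (2*j) \<in> U - {u (2*(i+2))}" if "j \<le> d+1" for j
          proof (cases "j = i+2")
            case True then show ?thesis using uU[of "2*i+3"] uneq[of "2*i+3" "2*(i+2)"] i unfolding w_def by auto
          next
            case False then show ?thesis using uU[of "2*j"] uneq[of "2*j" "2*(i+2)"] i that unfolding w_def by auto
          qed
          show "\<forall>C\<in>nu m d. C \<subseteq> A \<union> \<Sigma> \<longrightarrow> C \<in> simp_of m d T" by (rule sup)
        qed
      qed
    qed
  qed
  show ?thesis unfolding B'eq using part1 part2 by blast
qed


end
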